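(* Let $K\ge1$, fix $j\in\{1,\dots,K\}$, let $\lambda_j>0$, $\mu_j>0$ and $\rho_j=\lambda_j/\mu_j$. Let $f:\mathbb{Z}_{\ge0}^K\to\mathbb{R}$ be any function. For $\bar q=(q_1,\dots,q_K)\in\mathbb{Z}_{\ge0}^K$ define $$H(\bar q)=\frac{1}{\mu_j}\cdot\frac{1}{\rho_j}\sum_{i=1}^{q_j}\sum_{m=0}^{q_j-i} f\big(\bar q-(i+m)e_j\big)\frac{(q_j-i)!}{(q_j-i-m)!}\rho_j^{-m},$$ where $e_j$ is the $j$-th unit vector (so $H(\bar q)=0$ when $q_j=0$). Then for every $\bar q\in\mathbb{Z}_{\ge0}^K$, $$\lambda_j\big(H(\bar q+e_j)-H(\bar q)\big)-\mu_j q_j\big(H(\bar q)-H(\bar q-e_j)\big)=f(\bar q),$$ where the second term is interpreted as $0$ when $q_j=0$. *)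

theory Defs
  imports Main "HOL.Real"
begin

text \<open>Vectors in Z_{\<ge>0}^K are functions from a finite index type 'k (with CARD('k) = K \<ge> 1)
 to nat. The vector q - n e_j is q(j := q j - n) (only used with n \<le> q j).\<close>

definition Hfun :: "real \<Rightarrow> real \<Rightarrow> 'k \<Rightarrow> (('k \<Rightarrow> nat) \<Rightarrow> real) \<Rightarrow> ('k \<Rightarrow> nat) \<Rightarrow> real" where
  "Hfun lam mu j f q =
     (let rho = lam / mu in
      (1 / mu) * (1 / rho) *
      (\<Sum>i = 1..q j. \<Sum>m = 0..q j - i.
          f (q(j := q j - (i + m))) * (fact (q j - i) / fact (q j - i - m)) * inverse (rho ^ m)))"

end

theory Submission
  imports Defs
begin

definition Aux :: "real \<Rightarrow> (nat \<Rightarrow> real) \<Rightarrow> nat \<Rightarrow> real" where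
  "Aux r g k = (\<Sum>l = 0..k. g l * (fact k / fact l) * inverse (r ^ (k - l)))"

lemma inner_rev:
  "(\<Sum>m = 0..k. g (k - m) * (fact k / fact (k - m)) * inverse ((r::real) ^ m))
   = (\<Sum>l = 0..k. g l * (fact k / fact l) * inverse (r ^ (k - l)))"
  by (rule sum.reindex_bij_witness[of _ "\<lambda>l. k - l" "\<lambda>m. k - m"]) auto

lemma outer_rev:
  "(\<Sum>i = 1..N. (F::nat \<Rightarrow> real) (N - i)) = (\<Sum>k<N. F k)"
  by (rule sum.reindex_bij_witness[of _ "\<lambda>k. N - k" "\<lambda>i. N - i"]) auto

lemma H_closed:
  "Hfun lam mu j f (q(j := N)) =
     (1 / mu) * (1 / (lam / mu)) * (\<Sum>k<N. Aux (lam / mu) (\<lambda>l. f (q(j := l))) k)"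
proof -
  have "(\<Sum>i = 1..N. \<Sum>m = 0..N - i.
          f ((q(j := N))(j := N - (i + m))) * (fact (N - i) / fact (N - i - m)) * inverse ((lam/mu) ^ m))
      = (\<Sum>i = 1..N. (\<lambda>k. Aux (lam / mu) (\<lambda>l. f (q(j := l))) k) (N - i))"
  proof (rule sum.cong[OF refl])
    fix i assume "i \<in> {1..N}"
    have "(\<Sum>m = 0..N - i.
          f ((q(j := N))(j := N - (i + m))) * (fact (N - i) / fact (N - i - m)) * inverse ((lam/mu) ^ m))
        = (\<Sum>m = 0..N - i.
          (\<lambda>l. f (q(j := l))) (N - i - m) * (fact (N - i) / fact (N - i - m)) * inverse ((lam/mu) ^ m))"
      by (rule sum.cong[OF refl]) (simp add: diff_diff_left)
    also have "\<dots> = Aux (lam / mu) (\<lambda>l. f (q(j := l))) (N - i)"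
      unfolding Aux_def by (rule inner_rev)
    finally show "(\<Sum>m = 0..N - i.
          f ((q(j := N))(j := N - (i + m))) * (fact (N - i) / fact (N - i - m)) * inverse ((lam/mu) ^ m))
        = (\<lambda>k. Aux (lam / mu) (\<lambda>l. f (q(j := l))) k) (N - i)" by simp
  qed
  also have "\<dots> = (\<Sum>k<N. Aux (lam / mu) (\<lambda>l. f (q(j := l))) k)"
    by (rule outer_rev)
  finally show ?thesis unfolding Hfun_def Let_def by simp
qed

lemma Aux_0: "Aux r g 0 = g 0"
  unfolding Aux_def by simp

lemma Aux_Suc:
  assumes "(r::real) \<noteq> 0"
  shows "Aux r g (Suc k) = g (Suc k) + (real (Suc k) / r) * Aux r g k"
proof -
  have "Aux r g (Suc k) = (\<Sum>l = 0..k. g l * (fact (Suc k) / fact l) * inverse (r ^ (Suc k - l))) + g (Suc k)"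
    unfolding Aux_def by (simp add: sum.atLeast0_atMost_Suc)
  also have "(\<Sum>l = 0..k. g l * (fact (Suc k) / fact l) * inverse (r ^ (Suc k - l)))
      = (\<Sum>l = 0..k. (real (Suc k) / r) * (g l * (fact k / fact l) * inverse (r ^ (k - l))))"
  proof (rule sum.cong[OF refl])
    fix l assume "l \<in> {0..k}"
    then have "Suc k - l = Suc (k - l)" by auto
    then show "g l * (fact (Suc k) / fact l) * inverse (r ^ (Suc k - l))
        = (real (Suc k) / r) * (g l * (fact k / fact l) * inverse (r ^ (k - l)))"
      using assms by (simp add: field_simps)
  qed
  also have "\<dots> = (real (Suc k) / r) * Aux r g k"
    unfolding Aux_def by (simp add: sum_distrib_left)
  finally show ?thesis by simp
qed

theorem lemma3:
  fixes lam mu :: real and j :: "'k::finite" and f :: "('k \<Rightarrow> nat) \<Rightarrow> real" and q :: "'k \<Rightarrow> nat"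
  assumes "lam > 0" and "mu > 0"
  shows "lam * (Hfun lam mu j f (q(j := q j + 1)) - Hfun lam mu j f q)
           - (if q j = 0 then 0
              else mu * real (q j) * (Hfun lam mu j f q - Hfun lam mu j f (q(j := q j - 1))))
         = f q"
proof -
  define n where "n = q j"
  define g where "g = (\<lambda>l. f (q(j := l)))"
  define r where "r = lam / mu"
  have r0: "r \<noteq> 0" using assms unfolding r_def by simp
  have c: "lam * ((1 / mu) * (1 / r)) = 1" using assms unfolding r_def by simp
  have qq: "q = q(j := n)" unfolding n_def by simp
  have Hq: "Hfun lam mu j f q = (1 / mu) * (1 / r) * (\<Sum>k<n. Aux r g k)"
    using H_closed[of lam mu j f q n] qq unfolding g_def r_def by metis
  have Hn1: "Hfun lam mu j f (q(j := q j + 1)) = (1 / mu) * (1 / r) * (\<Sum>k<Suc n. Aux r g k)"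
    using H_closed[of lam mu j f q "Suc n"] unfolding g_def r_def n_def by simp
  have gn: "g n = f q" unfolding g_def n_def by simp
  have part1: "lam * (Hfun lam mu j f (q(j := q j + 1)) - Hfun lam mu j f q) = Aux r g n"
  proof -
    have "lam * (Hfun lam mu j f (q(j := q j + 1)) - Hfun lam mu j f q)
        = (lam * ((1 / mu) * (1 / r))) * Aux r g n"
      unfolding Hn1 Hq by (simp add: algebra_simps)
    then show ?thesis using c by (metis mult_1)
  qed
  show ?thesis
  proof (cases n)
    case 0
    then show ?thesis using part1 gn Aux_0[of r g] n_def by simp
  next
    case (Suc p)
    have Hp: "Hfun lam mu j f (q(j := n - 1)) = (1 / mu) * (1 / r) * (\<Sum>k<p. Aux r g k)"
      using H_closed[of lam mu j f q p] Suc unfolding g_def r_def n_def by simp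
    have sd: "(\<Sum>k<n. Aux r g k) - (\<Sum>k<p. Aux r g k) = Aux r g p" using Suc by simp
    have "mu * real (q j) * (Hfun lam mu j f q - Hfun lam mu j f (q(j := q j - 1)))
        = mu * real n * ((1 / mu) * (1 / r) * ((\<Sum>k<n. Aux r g k) - (\<Sum>k<p. Aux r g k)))"
      unfolding n_def[symmetric] Hq Hp by (simp only: right_diff_distrib)
    also have "\<dots> = mu * real n * ((1 / mu) * (1 / r) * Aux r g p)" by (simp only: sd)
    also have "\<dots> = (real n / r) * Aux r g p" using assms by simp
    finally have p2: "mu * real (q j) * (Hfun lam mu j f q - Hfun lam mu j f (q(j := q j - 1)))
        = (real n / r) * Aux r g p" .
    show ?thesis using part1 p2 Aux_Suc[OF r0, of g p] Suc gn n_def by simp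
  qed
qed

end
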